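(* Let $N\ge1$, $\varepsilon>0$, and let $(b_m)_{m\le N}$ be complex numbers. Let $f$ be a smooth function on $\mathbb R$ such that for some $X>0$ and $Y\ge N^{\varepsilon}$, for $|y|\le2$, $$f(0)=0,\qquad f'(0)=X,\qquad f^{(j+1)}(y)\ll XY^{-j}\ \ (j\ge1).$$ Then there is a nonnegative Schwartz-class function $q$, depending only on $\varepsilon$ and the implied constants in these hypotheses, satisfying $x^jq^{(j)}(x)\ll_{j,C}(1+|x|)^{-C}$, such that $$\int_{-1}^1\Big|\sum_{m\le N}b_me(mf(y))\Big|^2dy\le\int_{\mathbb R}q(y)\Big|\sum_{m\le N}b_me(mXy)\Big|^2dy+O\Big(N^{-100}\sum_{m\le N}|b_m|^2\Big).$$
   Context: $e(x)=e^{2\pi ix}$. *)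

theory Defs
  imports "HOL-Analysis.Analysis"
begin

definition e :: "real \<Rightarrow> complex" where
  "e x = exp (2 * of_real pi * \<i> * complex_of_real x)"

definition smooth_real :: "(real \<Rightarrow> real) \<Rightarrow> bool" where
  "smooth_real f \<longleftrightarrow> (\<forall>k x. ((deriv ^^ k) f has_real_derivative (deriv ^^ Suc k) f x) (at x))"

definition schwartz :: "(real \<Rightarrow> real) \<Rightarrow> bool" where
  "schwartz q \<longleftrightarrow> smooth_real q \<and>
     (\<forall>j k. \<exists>K. \<forall>x. \<bar>x ^ k * (deriv ^^ j) q x\<bar> \<le> K)"

end

theory Submission
  imports Defs "HOL-Computational_Algebra.Polynomial" "HOL-Probability.Probability"
begin


lemma exp_ge_term: fixes x::real assumes "x \<ge> 0" shows "x^n / fact n \<le> exp x"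
proof -
  have s: "(\<lambda>n. x^n /\<^sub>R fact n) sums exp x" by (rule exp_converges)
  have "(\<Sum>i\<in>{n}. x^i /\<^sub>R fact i) \<le> suminf (\<lambda>n. x^n /\<^sub>R fact n)"
    by (rule sum_le_suminf) (use s assms in \<open>auto simp: sums_iff\<close>)
  then show ?thesis using s by (simp add: sums_iff divide_inverse mult.commute)
qed

lemma poly_bound:
  fixes p :: "real poly"
  shows "\<bar>poly p x\<bar> \<le> (\<Sum>i\<le>degree p. \<bar>coeff p i\<bar>) * (1 + \<bar>x\<bar>) ^ degree p"
proof -
  have "\<bar>poly p x\<bar> = \<bar>\<Sum>i\<le>degree p. coeff p i * x ^ i\<bar>" by (simp add: poly_altdef)
  also have "\<dots> \<le> (\<Sum>i\<le>degree p. \<bar>coeff p i * x ^ i\<bar>)" by (rule sum_abs)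
  also have "\<dots> \<le> (\<Sum>i\<le>degree p. \<bar>coeff p i\<bar> * (1 + \<bar>x\<bar>) ^ degree p)"
  proof (rule sum_mono)
    fix i assume "i \<in> {..degree p}"
    then have "\<bar>x\<bar> ^ i \<le> (1 + \<bar>x\<bar>) ^ i" "(1 + \<bar>x\<bar>) ^ i \<le> (1 + \<bar>x\<bar>) ^ degree p"
      by (auto intro!: power_mono power_increasing)
    then show "\<bar>coeff p i * x ^ i\<bar> \<le> \<bar>coeff p i\<bar> * (1 + \<bar>x\<bar>) ^ degree p"
      by (simp add: abs_mult power_abs mult_left_mono)
  qed
  also have "\<dots> = (\<Sum>i\<le>degree p. \<bar>coeff p i\<bar>) * (1 + \<bar>x\<bar>) ^ degree p"
    by (simp add: sum_distrib_right)
  finally show ?thesis .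
qed

lemma gauss_decay:
  fixes p :: "real poly" and C :: real
  shows "\<exists>K. \<forall>x. \<bar>poly p x * exp (-(x\<^sup>2))\<bar> \<le> K * (1 + \<bar>x\<bar>) powr (-C)"
proof -
  define d where "d = degree p"
  define M where "M = (\<Sum>i\<le>degree p. \<bar>coeff p i\<bar>)"
  define n where "n = d + nat \<lceil>\<bar>C\<bar>\<rceil>"
  have M0: "M \<ge> 0" unfolding M_def by (auto intro: sum_nonneg)
  have cC: "real (nat \<lceil>\<bar>C\<bar>\<rceil>) \<ge> \<bar>C\<bar>"
  proof -
    have "real (nat \<lceil>\<bar>C\<bar>\<rceil>) = real_of_int \<lceil>\<bar>C\<bar>\<rceil>" by simp
    moreover have "\<bar>C\<bar> \<le> real_of_int \<lceil>\<bar>C\<bar>\<rceil>" by (rule le_of_int_ceiling)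
    ultimately show ?thesis by linarith
  qed
  have nC: "real d - 2 * real n \<le> - C"
  proof -
    define c where "c = real (nat \<lceil>\<bar>C\<bar>\<rceil>)"
    have c1: "c \<ge> \<bar>C\<bar>" using cC unfolding c_def .
    have "real n = real d + c" unfolding n_def c_def by simp
    then show ?thesis using c1 by (cases "C \<ge> 0") auto
  qed
  show ?thesis
  proof (intro exI allI)
    fix x :: real
    define t where "t = 1 + \<bar>x\<bar>"
    have t1: "t \<ge> 1" unfolding t_def by simp
    have "t\<^sup>2 \<le> 2 + 2 * x\<^sup>2" unfolding t_def
      using sum_squares_ge_zero[of "\<bar>x\<bar> - 1" 0] by (simp add: power2_eq_square algebra_simps)
    then have "-(x\<^sup>2) \<le> 1 - t\<^sup>2/2" by simp
    then have e1: "exp (-(x\<^sup>2)) \<le> exp 1 * exp (-(t\<^sup>2/2))"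
      by (simp add: exp_add[symmetric])
    have "(t\<^sup>2/2)^n / fact n \<le> exp (t\<^sup>2/2)" by (rule exp_ge_term) simp
    then have "exp (-(t\<^sup>2/2)) \<le> fact n * 2^n / (t\<^sup>2)^n"
      using t1 by (simp add: exp_minus field_simps power_mult power_divide mult.commute[of 2 n])
    then have e2: "exp (-(x\<^sup>2)) \<le> exp 1 * (fact n * 2^n / (t\<^sup>2)^n)"
      using e1 by (meson exp_gt_zero less_eq_real_def mult_left_mono order.trans)
    have pb: "\<bar>poly p x\<bar> \<le> M * t ^ d" using poly_bound[of p x] by (simp add: M_def d_def t_def)
    have "\<bar>poly p x * exp (-(x\<^sup>2))\<bar> = \<bar>poly p x\<bar> * exp (-(x\<^sup>2))" by (simp add: abs_mult)
    also have "\<dots> \<le> (M * t ^ d) * (exp 1 * (fact n * 2^n / (t\<^sup>2)^n))"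
      by (intro mult_mono pb e2) (use M0 t1 in auto)
    also have "\<dots> = (M * exp 1 * fact n * 2^n) * (t ^ d / (t\<^sup>2)^n)" by simp
    also have "t ^ d / (t\<^sup>2)^n = t powr (real d - 2 * real n)"
    proof -
      have tp: "t ^ (2*n) = t powr (2 * real n)" using t1 powr_realpow[of t "2*n"] by simp
      show ?thesis using t1 tp by (simp add: powr_diff powr_realpow flip: power_mult)
    qed
    also have "\<dots> \<le> t powr (-C)" using t1 nC by (intro powr_mono) auto
    finally show "\<bar>poly p x * exp (-(x\<^sup>2))\<bar> \<le> (M * exp 1 * fact n * 2^n) * (1 + \<bar>x\<bar>) powr (-C)"
      using M0 unfolding t_def by (simp add: mult_left_mono)
  qed
qed

primrec Pg :: "nat \<Rightarrow> real poly" where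
  "Pg 0 = [:1:]"
| "Pg (Suc n) = pderiv (Pg n) - [:0, 2:] * Pg n"

definition qg :: "real \<Rightarrow> real" where "qg x = 2 * exp 4 * exp (-(x\<^sup>2))"

lemma qg_has_deriv:
  "((\<lambda>x. 2 * exp 4 * poly p x * exp (-(x\<^sup>2))) has_real_derivative
     2 * exp 4 * poly (pderiv p - [:0, 2:] * p) x * exp (-(x\<^sup>2))) (at x)"
  by (auto intro!: derivative_eq_intros simp: algebra_simps)

lemma qg_deriv_iter: "(deriv ^^ n) qg = (\<lambda>x. 2 * exp 4 * poly (Pg n) x * exp (-(x\<^sup>2)))"
proof (induction n)
  case 0 show ?case by (simp add: qg_def fun_eq_iff)
next
  case (Suc n)
  show ?case using qg_has_deriv[of "Pg n"] by (auto simp: Suc fun_eq_iff intro: DERIV_imp_deriv)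
qed

lemma qg_smooth: "smooth_real qg"
  unfolding smooth_real_def qg_deriv_iter using qg_has_deriv by simp

lemma qg_decay: "\<exists>K. \<forall>x. \<bar>x ^ j * (deriv ^^ k) qg x\<bar> \<le> K * (1 + \<bar>x\<bar>) powr (- C)"
proof -
  obtain K where K: "\<forall>x. \<bar>poly (monom (2 * exp 4) j * Pg k) x * exp (-(x\<^sup>2))\<bar> \<le> K * (1 + \<bar>x\<bar>) powr (-C)"
    using gauss_decay by blast
  show ?thesis
    by (rule exI[of _ K]) (use K in \<open>simp add: qg_deriv_iter poly_monom mult_ac\<close>)
qed

lemma qg_schwartz: "schwartz qg"
  unfolding schwartz_def
proof (intro conjI qg_smooth allI)
  fix j k
  obtain K where K: "\<forall>x. \<bar>x ^ k * (deriv ^^ j) qg x\<bar> \<le> K * (1 + \<bar>x\<bar>) powr (- 0)"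
    using qg_decay by blast
  show "\<exists>K. \<forall>x. \<bar>x ^ k * (deriv ^^ j) qg x\<bar> \<le> K"
  proof (rule exI[of _ K], rule allI)
    fix x :: real
    have "1 + \<bar>x\<bar> \<noteq> 0" by linarith
    then show "\<bar>x ^ k * (deriv ^^ j) qg x\<bar> \<le> K" using spec[OF K, of x] by simp
  qed
qed

lemma qg_nonneg: "qg x \<ge> 0" by (simp add: qg_def)

lemma qg_ge2: "\<bar>x\<bar> \<le> 2 \<Longrightarrow> qg x \<ge> 2"
proof -
  assume "\<bar>x\<bar> \<le> 2"
  then have "x\<^sup>2 \<le> 4" using power_mono[of "\<bar>x\<bar>" 2 2] by simp
  then have "exp (-4) \<le> exp (-(x\<^sup>2))" by simp
  then have "2 * exp 4 * exp (-4) \<le> 2 * exp 4 * exp (-(x\<^sup>2))" by simp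
  then show ?thesis by (simp add: qg_def exp_minus)
qed

lemma qg_integrable: "qg integrable_on UNIV"
proof -
  have "has_bochner_integral lborel (\<lambda>x::real. exp (-x\<^sup>2)*x^(2 * 0)) (sqrt pi * (fact (2 * 0) / (2 ^ (2 * 0) * fact 0)))"
    using has_bochner_integral_even_function[OF gaussian_moment_even_pos[where k=0]] by simp
  then have "integrable lborel (\<lambda>x::real. exp (-x\<^sup>2))" by (simp add: has_bochner_integral_iff)
  then have "(\<lambda>x::real. exp (-x\<^sup>2)) integrable_on UNIV" by (rule integrable_on_lborel)
  then show ?thesis unfolding qg_def[abs_def] by (simp add: mult.assoc)
qed



lemma mvt_bound:
  fixes F F' :: "real \<Rightarrow> real"
  assumes der: "\<And>x. (F has_real_derivative F' x) (at x)"
    and bd: "\<And>x. \<bar>x\<bar> \<le> 1 \<Longrightarrow> \<bar>F' x\<bar> \<le> B" and y: "\<bar>y\<bar> \<le> 1"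
  shows "\<bar>F y - F 0\<bar> \<le> B * \<bar>y\<bar>"
proof (cases "y > 0")
  case True
  obtain z where z: "0 < z" "z < y" "F y - F 0 = (y - 0) * F' z"
    using MVT2[OF True der] by blast
  have "\<bar>F' z\<bar> \<le> B" using z y by (intro bd) auto
  then show ?thesis using z True by (simp add: abs_mult mult.commute mult_left_mono)
next
  case False
  show ?thesis
  proof (cases "y = 0")
    case True then show ?thesis by simp
  next
    case False
    with \<open>\<not> y > 0\<close> have yn: "y < 0" by simp
    obtain z where z: "y < z" "z < 0" "F 0 - F y = (0 - y) * F' z"
      using MVT2[OF yn der] by blast
    have "\<bar>F' z\<bar> \<le> B" using z y by (intro bd) auto
    then show ?thesis using z yn by (simp add: abs_mult abs_minus_commute mult.commute mult_left_mono)
  qed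
qed

lemma subst_bound:
  fixes g g' h :: "real \<Rightarrow> real"
  assumes hc: "continuous_on UNIV h" and h0: "\<And>u. h u \<ge> 0"
    and der: "\<And>y. (g has_real_derivative g' y) (at y)"
    and g'c: "continuous_on {-1..1} g'"
    and g'b: "\<And>y. \<bar>y\<bar> \<le> 1 \<Longrightarrow> 1/2 \<le> g' y \<and> g' y \<le> 3/2"
    and g0: "g 0 = 0"
  shows "integral {-1..1} (\<lambda>y. h (g y)) \<le> 2 * integral {-2..2} h"
proof -
  have gc: "continuous_on UNIV g"
    using der by (intro DERIV_continuous_on) (auto intro: has_field_derivative_at_within)
  have gb: "\<bar>g y\<bar> \<le> 2" if "\<bar>y\<bar> \<le> 1" for y
  proof -
    have "\<bar>g y - g 0\<bar> \<le> 3/2 * \<bar>y\<bar>"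
    proof (rule mvt_bound[OF der])
      fix x :: real assume "\<bar>x\<bar> \<le> 1"
      then show "\<bar>g' x\<bar> \<le> 3/2" using g'b[of x] by auto
    qed (use that in auto)
    then show ?thesis using g0 that by simp
  qed
  have mono: "g (-1) \<le> g 1"
  proof -
    obtain z where z: "-1 < z" "z < 1" "g 1 - g (-1) = (1 - (-1)) * g' z"
      using MVT2[of "-1" 1 g g'] der by auto
    have "g' z \<ge> 1/2" using g'b[of z] z by auto
    then show ?thesis using z by simp
  qed
  have sub: "g ` {-1..1} \<subseteq> {-2..2}"
  proof
    fix u assume "u \<in> g ` {-1..1}"
    then obtain y where "y \<in> {-1..1}" "u = g y" by auto
    then have "\<bar>u\<bar> \<le> 2" using gb[of y] by auto
    then show "u \<in> {-2..2}" by auto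
  qed
  have hc2: "continuous_on {-2..2} h" using hc by (rule continuous_on_subset) simp
  have S: "((\<lambda>x. g' x *\<^sub>R h (g x)) has_integral integral {g (-1)..g 1} h) {-1..1}"
    by (rule has_integral_substitution[OF _ mono sub hc2]) (auto intro: has_field_derivative_at_within der)
  have hgc: "continuous_on {-1..1} (\<lambda>y. h (g y))"
  proof -
    have "continuous_on UNIV (\<lambda>y. h (g y))" using continuous_on_compose2[OF hc gc] by simp
    then show ?thesis by (rule continuous_on_subset) simp
  qed
  have "integral {-1..1} (\<lambda>y. h (g y)) \<le> integral {-1..1} (\<lambda>x. 2 * (g' x *\<^sub>R h (g x)))"
  proof (rule integral_le)
    show "(\<lambda>y. h (g y)) integrable_on {-1..1}" using hgc by (rule integrable_continuous_real)
    show "(\<lambda>x. 2 * (g' x *\<^sub>R h (g x))) integrable_on {-1..1}"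
      using S by (intro integrable_on_cmult_left[where c=2, simplified]) (auto simp: has_integral_integrable)
    fix x :: real assume "x \<in> {-1..1}"
    then have "\<bar>x\<bar> \<le> 1" by auto
    then have "2 * g' x \<ge> 1" using g'b[of x] by linarith
    then have "1 * h (g x) \<le> (2 * g' x) * h (g x)" using h0[of "g x"] by (intro mult_right_mono) auto
    then show "h (g x) \<le> 2 * (g' x *\<^sub>R h (g x))" by simp
  qed
  also have "\<dots> = 2 * integral {g (-1)..g 1} h"
    using S by (simp add: integral_unique)
  also have "integral {g (-1)..g 1} h \<le> integral {-2..2} h"
  proof (rule integral_subset_le)
    show "{g (- 1)..g 1} \<subseteq> {- 2..2}" using gb[of 1] gb[of "-1"] by auto
    show "h integrable_on {g (- 1)..g 1}" using hc by (intro integrable_continuous_real continuous_on_subset[OF hc]) auto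
    show "h integrable_on {- 2..2}" using hc2 by (rule integrable_continuous_real)
  qed (use h0 in auto)
  finally show ?thesis by simp
qed

lemma cmod_e [simp]: "cmod (e x) = 1"
  unfolding e_def by (simp add: norm_exp_eq_Re)

lemma cont_e [continuous_intros]: "continuous_on S u \<Longrightarrow> continuous_on S (\<lambda>x. e (u x))"
  unfolding e_def by (intro continuous_intros)

lemma sum_bound:
  fixes b :: "nat \<Rightarrow> complex"
  shows "(cmod (\<Sum>m=1..N. b m * e (t m)))\<^sup>2 \<le> (\<Sum>m=1..N. cmod (b m))\<^sup>2"
proof -
  have "cmod (\<Sum>m=1..N. b m * e (t m)) \<le> (\<Sum>m=1..N. cmod (b m * e (t m)))" by (rule norm_sum)
  also have "\<dots> = (\<Sum>m=1..N. cmod (b m))" by (simp add: norm_mult)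
  finally show ?thesis by (intro power_mono) auto
qed


theorem lemma7p4:
  fixes \<epsilon> :: real and A :: "nat \<Rightarrow> real"
  assumes "\<epsilon> > 0"
  shows "\<exists>q :: real \<Rightarrow> real.
    schwartz q \<and> (\<forall>x. q x \<ge> 0) \<and>
    (\<forall>(j::nat) (C::real). \<exists>K. \<forall>x. \<bar>x ^ j * (deriv ^^ j) q x\<bar> \<le> K * (1 + \<bar>x\<bar>) powr (- C)) \<and>
    (\<exists>K. \<forall>(N::nat) (b::nat \<Rightarrow> complex) (f::real \<Rightarrow> real) (X::real) (Y::real).
       N \<ge> 1 \<and> smooth_real f \<and> X > 0 \<and> Y \<ge> real N powr \<epsilon> \<and>
       f 0 = 0 \<and> deriv f 0 = X \<and>
       (\<forall>j\<ge>1. \<forall>y. \<bar>y\<bar> \<le> 2 \<longrightarrow> \<bar>(deriv ^^ (j + 1)) f y\<bar> \<le> A j * X / Y ^ j)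
       \<longrightarrow>
       integral {-1..1} (\<lambda>y. (cmod (\<Sum>m=1..N. b m * e (real m * f y)))\<^sup>2)
         \<le> integral UNIV (\<lambda>y. q y * (cmod (\<Sum>m=1..N. b m * e (real m * X * y)))\<^sup>2)
           + K * real N powr (-100) * (\<Sum>m=1..N. (cmod (b m))\<^sup>2))"
proof -
  have P3: "\<forall>(j::nat) (C::real). \<exists>K. \<forall>x. \<bar>x ^ j * (deriv ^^ j) qg x\<bar> \<le> K * (1 + \<bar>x\<bar>) powr (- C)"
    using qg_decay by blast
  define N0 :: nat where "N0 = nat \<lceil>(2 * \<bar>A 1\<bar> + 1) powr (1 / \<epsilon>)\<rceil>"
  define K where "K = 2 * real N0 ^ 101"
  have P4: "\<exists>K. \<forall>(N::nat) (b::nat \<Rightarrow> complex) (f::real \<Rightarrow> real) (X::real) (Y::real).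
       N \<ge> 1 \<and> smooth_real f \<and> X > 0 \<and> Y \<ge> real N powr \<epsilon> \<and>
       f 0 = 0 \<and> deriv f 0 = X \<and>
       (\<forall>j\<ge>1. \<forall>y. \<bar>y\<bar> \<le> 2 \<longrightarrow> \<bar>(deriv ^^ (j + 1)) f y\<bar> \<le> A j * X / Y ^ j)
       \<longrightarrow>
       integral {-1..1} (\<lambda>y. (cmod (\<Sum>m=1..N. b m * e (real m * f y)))\<^sup>2)
         \<le> integral UNIV (\<lambda>y. qg y * (cmod (\<Sum>m=1..N. b m * e (real m * X * y)))\<^sup>2)
           + K * real N powr (-100) * (\<Sum>m=1..N. (cmod (b m))\<^sup>2)"
  proof (rule exI[of _ K], intro allI impI)
    fix N :: nat and b :: "nat \<Rightarrow> complex" and f :: "real \<Rightarrow> real" and X Y :: real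
    assume H: "N \<ge> 1 \<and> smooth_real f \<and> X > 0 \<and> Y \<ge> real N powr \<epsilon> \<and>
       f 0 = 0 \<and> deriv f 0 = X \<and>
       (\<forall>j\<ge>1. \<forall>y. \<bar>y\<bar> \<le> 2 \<longrightarrow> \<bar>(deriv ^^ (j + 1)) f y\<bar> \<le> A j * X / Y ^ j)"
    then have N1: "N \<ge> 1" and sm: "smooth_real f" and X0: "X > 0" and YN: "Y \<ge> real N powr \<epsilon>"
      and f0: "f 0 = 0" and fd0: "deriv f 0 = X"
      and hb: "\<forall>j\<ge>1. \<forall>y. \<bar>y\<bar> \<le> 2 \<longrightarrow> \<bar>(deriv ^^ (j + 1)) f y\<bar> \<le> A j * X / Y ^ j"
      by auto
    define h where "h = (\<lambda>u. (cmod (\<Sum>m=1..N. b m * e (real m * X * u)))\<^sup>2)"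
    define B where "B = (\<Sum>m=1..N. (cmod (b m))\<^sup>2)"
    define S where "S = (\<Sum>m=1..N. cmod (b m))"
    have B0: "B \<ge> 0" unfolding B_def by (intro sum_nonneg) auto
    have hc: "continuous_on UNIV h" unfolding h_def by (intro continuous_intros)
    have h0: "\<And>u. h u \<ge> 0" unfolding h_def by simp
    have hbd: "\<And>u. h u \<le> S\<^sup>2" unfolding h_def S_def by (rule sum_bound)
    have qhint: "(\<lambda>y. qg y * h y) integrable_on UNIV"
    proof (rule integrable_on_all_intervals_integrable_bound[where g="\<lambda>y. S\<^sup>2 * qg y"])
      show "(\<lambda>x. if x \<in> UNIV then qg x * h x else 0) integrable_on cbox a b" for a b
      proof -
        have "continuous_on (cbox a b) (\<lambda>x. qg x * h x)"
          unfolding qg_def using hc by (intro continuous_intros continuous_on_subset[OF hc]) auto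
        then show ?thesis by (auto intro: integrable_continuous_real)
      qed
      show "norm (qg x * h x) \<le> S\<^sup>2 * qg x" if "x \<in> UNIV" for x
        using hbd[of x] h0[of x] qg_nonneg[of x] by (simp add: abs_mult mult.commute mult_left_mono)
      show "(\<lambda>y. S\<^sup>2 * qg y) integrable_on UNIV"
        using integrable_cmul[OF qg_integrable, of "S\<^sup>2"] by simp
    qed
    have RHS0: "integral UNIV (\<lambda>y. qg y * h y) \<ge> 0"
      by (rule integral_nonneg[OF qhint]) (use qg_nonneg h0 in auto)
    have LHSeq: "(\<lambda>y. (cmod (\<Sum>m=1..N. b m * e (real m * f y)))\<^sup>2) = (\<lambda>y. h (f y / X))"
      unfolding h_def using X0 by (simp add: fun_eq_iff)
    have smk: "\<And>k x. ((deriv ^^ k) f has_real_derivative (deriv ^^ Suc k) f x) (at x)"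
      using sm unfolding smooth_real_def by blast
    have fder: "\<And>x. (f has_real_derivative deriv f x) (at x)"
      using smk[of 0] by simp
    have f'der: "\<And>x. (deriv f has_real_derivative (deriv ^^ Suc 1) f x) (at x)"
      using smk[of 1] by simp
    have fc: "continuous_on UNIV f"
      using fder by (intro DERIV_continuous_on) (auto intro: has_field_derivative_at_within)
    have hfc: "continuous_on UNIV (\<lambda>y. h (f y / X))"
    proof -
      have "continuous_on UNIV (\<lambda>y. f y / X)" using fc X0 by (intro continuous_intros) auto
      then show ?thesis using continuous_on_compose2[OF hc, of UNIV "\<lambda>y. f y / X"] by simp
    qed
    have main: "integral {-1..1} (\<lambda>y. h (f y / X)) \<le> integral UNIV (\<lambda>y. qg y * h y) + K * real N powr (-100) * B"
    proof (cases "N \<ge> N0")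
      case True
      have K0: "K \<ge> 0" unfolding K_def by simp
      have err0: "K * real N powr (-100) * B \<ge> 0" using K0 B0 by simp
      have "real N \<ge> (2 * \<bar>A 1\<bar> + 1) powr (1 / \<epsilon>)"
      proof -
        have "(2 * \<bar>A 1\<bar> + 1) powr (1 / \<epsilon>) \<le> real N0" unfolding N0_def by (rule real_nat_ceiling_ge)
        also have "\<dots> \<le> real N" using True by simp
        finally show ?thesis .
      qed
      then have Nge: "(2 * \<bar>A 1\<bar> + 1) powr (1 / \<epsilon>) \<le> real N" .
      have c0: "0 \<le> (2 * \<bar>A 1\<bar> + 1) powr (1 / \<epsilon>)" by simp
      have e0: "0 \<le> \<epsilon>" using assms by linarith
      have pm: "((2 * \<bar>A 1\<bar> + 1) powr (1 / \<epsilon>)) powr \<epsilon> \<le> real N powr \<epsilon>"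
        by (rule powr_mono2[OF e0 c0 Nge])
      have pp: "((2 * \<bar>A 1\<bar> + 1) powr (1 / \<epsilon>)) powr \<epsilon> = (2 * \<bar>A 1\<bar> + 1) powr (1 / \<epsilon> * \<epsilon>)"
        by (rule powr_powr)
      have ee: "1 / \<epsilon> * \<epsilon> = 1" using assms by simp
      have p1: "(2 * \<bar>A 1\<bar> + 1) powr 1 = 2 * \<bar>A 1\<bar> + 1" by (rule powr_one) simp
      have "2 * \<bar>A 1\<bar> + 1 \<le> real N powr \<epsilon>" using pm unfolding pp ee p1 .
      then have YA: "2 * \<bar>A 1\<bar> + 1 \<le> Y" using YN by linarith
      then have Y0: "Y > 0" by linarith
      have d2: "\<bar>(deriv ^^ Suc 1) f y\<bar> \<le> A 1 * X / Y" if "\<bar>y\<bar> \<le> 1" for y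
      proof -
        have "\<bar>(deriv ^^ (1 + 1)) f y\<bar> \<le> A 1 * X / Y ^ 1"
          using hb that
          apply -
          apply (drule spec[of _ 1])
          apply (drule mp) apply simp
          apply (drule spec[of _ y])
          apply (drule mp) apply simp
          apply assumption
          done
        then show ?thesis by (simp only: Suc_eq_plus1 power_one_right)
      qed
      have Bd: "A 1 * X / Y \<le> X / 2"
      proof -
        have "A 1 \<le> Y / 2" using YA by linarith
        then have "A 1 * X \<le> Y / 2 * X" using X0 by (intro mult_right_mono) auto
        then show ?thesis using Y0 by (simp add: divide_le_eq field_simps)
      qed
      have dfb: "\<bar>deriv f y - X\<bar> \<le> X / 2" if "\<bar>y\<bar> \<le> 1" for y
      proof -
        have "\<bar>deriv f y - deriv f 0\<bar> \<le> (A 1 * X / Y) * \<bar>y\<bar>"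
          by (rule mvt_bound[OF f'der d2 that])
        also have "\<dots> \<le> A 1 * X / Y * 1"
        proof (rule mult_left_mono)
          show "\<bar>y\<bar> \<le> 1" by (rule that)
          show "0 \<le> A 1 * X / Y" 
          proof -
            have "\<bar>(deriv ^^ Suc 1) f 0\<bar> \<le> A 1 * X / Y" by (rule d2) simp
            then show ?thesis using abs_ge_zero[of "(deriv ^^ Suc 1) f 0"] by linarith
          qed
        qed
        finally have "\<bar>deriv f y - X\<bar> \<le> A 1 * X / Y" using fd0 by simp
        then show ?thesis using Bd by linarith
      qed
      have step1: "integral {-1..1} (\<lambda>y. h (f y / X)) \<le> 2 * integral {-2..2} h"
      proof (rule subst_bound[OF hc h0, where g' = "\<lambda>y. deriv f y / X"])
        show "((\<lambda>y. f y / X) has_real_derivative deriv f y / X) (at y)" for y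
          by (rule DERIV_cdivide[OF fder])
        have "continuous_on UNIV (deriv f)"
          using f'der by (intro DERIV_continuous_on) (auto intro: has_field_derivative_at_within)
        then have "continuous_on {-1..1} (deriv f)" by (rule continuous_on_subset) simp
        then show "continuous_on {-1..1} (\<lambda>y. deriv f y / X)"
          using X0 by (intro continuous_intros) auto
        show "1/2 \<le> deriv f y / X \<and> deriv f y / X \<le> 3/2" if "\<bar>y\<bar> \<le> 1" for y
        proof -
          have a1: "X/2 \<le> deriv f y" "deriv f y \<le> 3/2 * X" using dfb[OF that] by linarith+
          have "1/2 \<le> deriv f y / X" using a1 X0 by (simp add: le_divide_eq)
          moreover have "deriv f y / X \<le> 3/2" using a1 X0 by (simp add: divide_le_eq)
          ultimately show ?thesis by simp
        qed
        show "f 0 / X = 0" using f0 by simp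
      qed
      have hc2: "continuous_on {-2..2} (\<lambda>y. qg y * h y)"
        unfolding qg_def by (intro continuous_intros continuous_on_subset[OF hc]) auto
      have step2: "2 * integral {-2..2} h \<le> integral {-2..2} (\<lambda>y. qg y * h y)"
      proof -
        have "2 * integral {-2..2} h = integral {-2..2} (\<lambda>y. 2 * h y)" by simp
        also have "\<dots> \<le> integral {-2..2} (\<lambda>y. qg y * h y)"
        proof (rule integral_le)
          show "(\<lambda>y. 2 * h y) integrable_on {-2..2}"
            by (intro integrable_continuous_real continuous_intros continuous_on_subset[OF hc]) auto
          show "(\<lambda>y. qg y * h y) integrable_on {-2..2}" using hc2 by (rule integrable_continuous_real)
          fix x :: real assume "x \<in> {-2..2}"
          then have "qg x \<ge> 2" by (intro qg_ge2) auto
          then show "2 * h x \<le> qg x * h x" using h0[of x] by (intro mult_right_mono) auto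
        qed
        finally show ?thesis .
      qed
      have step3: "integral {-2..2} (\<lambda>y. qg y * h y) \<le> integral UNIV (\<lambda>y. qg y * h y)"
      proof (rule integral_subset_le)
        show "{-2..2::real} \<subseteq> UNIV" by simp
        show "(\<lambda>y. qg y * h y) integrable_on {-2..2}" using hc2 by (rule integrable_continuous_real)
        show "(\<lambda>y. qg y * h y) integrable_on UNIV" by (rule qhint)
        show "\<forall>x\<in>UNIV. 0 \<le> qg x * h x" using qg_nonneg h0 by simp
      qed
      show ?thesis using step1 step2 step3 err0 by linarith
    next
      case False
      have hfi: "(\<lambda>y. h (f y / X)) integrable_on {-1..1}"
        by (intro integrable_continuous_real continuous_on_subset[OF hfc]) auto
      have "integral {-1..1} (\<lambda>y. h (f y / X)) \<le> integral {-1..1} (\<lambda>y::real. S\<^sup>2)"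
      proof (rule integral_le)
        show "(\<lambda>y. h (f y / X)) integrable_on {-1..1}" by (rule hfi)
        show "(\<lambda>y. S\<^sup>2) integrable_on {-1..1::real}" by (rule integrable_const_ivl)
        show "h (f x / X) \<le> S\<^sup>2" if "x \<in> {-1..1}" for x by (rule hbd)
      qed
      also have "\<dots> = 2 * S\<^sup>2" by simp
      also have "S\<^sup>2 \<le> B * real N"
        unfolding S_def B_def using sum_squared_le_sum_of_squares[of "\<lambda>m. cmod (b m)" "{1..N}"] by simp
      finally have L: "integral {-1..1} (\<lambda>y. h (f y / X)) \<le> 2 * real N * B" by (simp add: mult_ac)
      have NN: "2 * real N \<le> K * real N powr (-100)"
      proof -
        have Np: "real N > 0" using N1 by simp
        have "real N ^ 101 \<le> real N0 ^ 101" using False by (intro power_mono) auto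
        then have "2 * real N ^ 101 * real N powr (-100) \<le> K * real N powr (-100)"
          unfolding K_def by (intro mult_right_mono) auto
        moreover have "real N ^ 101 * real N powr (-100) = real N"
        proof -
          have e1: "real N ^ 101 = real N powr 101" using powr_realpow[of "real N" 101] Np by simp
          have e2: "real N powr 101 * real N powr (-100) = real N powr (101 + (-100))"
            by (rule powr_add[symmetric])
          have e3: "real N powr (101 + (-100)) = real N" using Np by simp
          show ?thesis unfolding e1 e2 e3 by (rule refl)
        qed
        ultimately show ?thesis by (simp add: mult.assoc)
      qed
      have "2 * real N * B \<le> K * real N powr (-100) * B" using NN B0 by (intro mult_right_mono) auto
      then show ?thesis using L RHS0 by linarith
    qed
    show "integral {-1..1} (\<lambda>y. (cmod (\<Sum>m=1..N. b m * e (real m * f y)))\<^sup>2)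
         \<le> integral UNIV (\<lambda>y. qg y * (cmod (\<Sum>m=1..N. b m * e (real m * X * y)))\<^sup>2)
           + K * real N powr (-100) * (\<Sum>m=1..N. (cmod (b m))\<^sup>2)"
      unfolding LHSeq using main unfolding h_def B_def .
  qed
  show ?thesis by (rule exI[of _ qg]) (intro conjI qg_schwartz P3 P4 allI qg_nonneg)
qed

end
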